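(* Let $e\geq 2$ and $N=\langle\sigma\rangle$ cyclic of order $2^e$. Every transitive subgroup $G$ of $\mathrm{Hol}(N)$ has an element of order $2^{e-1}$. Moreover, if $G$ has no element of order $2^e$, then $b-1\equiv 2v\pmod 4$ for all $[\sigma^v,\varphi_b]\in G$, and in particular $\mathrm{Stab}_G(1_N)\subseteq\langle\varphi_5\rangle$.
   Context: For an odd integer $a$, $\varphi_a\in\mathrm{Aut}(N)$ is $\sigma\mapsto\sigma^a$. Elements of $\mathrm{Hol}(N)=N\rtimes\mathrm{Aut}(N)$ are written $[\sigma^u,\varphi_a]$ with $[\sigma^u,\varphi_a][\sigma^v,\varphi_b]=[\sigma^{u+va},\varphi_{ab}]$. $\mathrm{Hol}(N)$ acts on $N$ by $[\sigma^u,\varphi_a]\cdot\sigma^v=\sigma^{u+av}$; a subgroup is transitive if it acts transitively on $N$; $\mathrm{Stab}_G(1_N)=G\cap\mathrm{Aut}(N)$. *)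

theory Defs
  imports "HOL-Algebra.Algebra" "HOL-Number_Theory.Cong"
begin

text \<open>N = <sigma> cyclic of order 2^e; sigma^u is represented by u in {0..<2^e}.
  The automorphism phi_a (a odd) is represented by a mod 2^e.
  The element [sigma^u, phi_a] of Hol(N) is the pair (u, a) with canonical
  representatives 0 <= u, a < 2^e, a odd.\<close>

definition hol :: "nat \<Rightarrow> (int \<times> int) monoid" where
  "hol e = \<lparr> carrier = {(u, a). 0 \<le> u \<and> u < 2^e \<and> 0 \<le> a \<and> a < 2^e \<and> odd a},
             monoid.mult = (\<lambda>(u, a) (v, b). ((u + v * a) mod 2^e, (a * b) mod 2^e)),
             monoid.one = (0, 1 mod 2^e) \<rparr>"

definition hol_act :: "nat \<Rightarrow> int \<times> int \<Rightarrow> int \<Rightarrow> int" where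
  "hol_act e g v = (fst g + snd g * v) mod 2^e"

definition hol_transitive :: "nat \<Rightarrow> (int \<times> int) set \<Rightarrow> bool" where
  "hol_transitive e G \<longleftrightarrow>
     (\<forall>x \<in> {0..<2^e}. \<forall>y \<in> {0..<2^e}. \<exists>g \<in> G. hol_act e g x = y)"

definition hol_stab :: "nat \<Rightarrow> (int \<times> int) set \<Rightarrow> (int \<times> int) set" where
  "hol_stab e G = {g \<in> G. hol_act e g 0 = 0}"

end

theory Submission
  imports Defs "HOL-Computational_Algebra.Primes"
begin

lemma hol_mult: "(u, a) \<otimes>\<^bsub>hol e\<^esub> (v, b) = ((u + v * a) mod 2^e, (a * b) mod 2^e)"
  by (simp add: hol_def)
lemma hol_one: "\<one>\<^bsub>hol e\<^esub> = (0, 1 mod 2^e)"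
  by (simp add: hol_def)
lemma hol_carrier: "(u, a) \<in> carrier (hol e) \<longleftrightarrow> 0 \<le> u \<and> u < 2^e \<and> 0 \<le> a \<and> a < 2^e \<and> odd a"
  by (simp add: hol_def)

lemma odd_mod_pow2:
  assumes "odd (x::int)" "e \<ge> 1" shows "odd (x mod 2^e)"
proof
  assume h: "even (x mod 2^e)"
  have "(2::int) dvd 2^e" using assms(2) by (simp add: dvd_power)
  then have "2 dvd 2^e * (x div 2^e)" by simp
  with h have "2 dvd x mod 2^e + 2^e * (x div 2^e)" by (rule dvd_add)
  then have "2 dvd x" by (simp only: mod_mult_div_eq)
  then show False using assms(1) by simp
qed


lemma modL1: "((x::int) mod m + y * (z mod m)) mod m = (x + y*z) mod m"
proof -
  have "[x mod m + y * (z mod m) = x + y*z] (mod m)"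
    by (intro cong_add cong_mult cong_refl) (simp_all add: cong_def)
  then show ?thesis by (simp add: cong_def)
qed
lemma modL2: "((x::int) + (y mod m) * z) mod m = (x + y*z) mod m"
proof -
  have "[x + (y mod m) * z = x + y*z] (mod m)"
    by (intro cong_add cong_mult cong_refl) (simp_all add: cong_def)
  then show ?thesis by (simp add: cong_def)
qed
lemma group_hol:
  assumes "e \<ge> 1"
  shows "group (hol e)"
proof (rule groupI)
  fix x y assume "x \<in> carrier (hol e)" "y \<in> carrier (hol e)"
  then show "x \<otimes>\<^bsub>hol e\<^esub> y \<in> carrier (hol e)"
    using assms by (cases x; cases y) (auto simp: hol_mult hol_carrier odd_mod_pow2)
next
  show "\<one>\<^bsub>hol e\<^esub> \<in> carrier (hol e)" using assms by (simp add: hol_one hol_carrier)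
next
  fix x y z assume "x \<in> carrier (hol e)" "y \<in> carrier (hol e)" "z \<in> carrier (hol e)"
  then show "x \<otimes>\<^bsub>hol e\<^esub> y \<otimes>\<^bsub>hol e\<^esub> z = x \<otimes>\<^bsub>hol e\<^esub> (y \<otimes>\<^bsub>hol e\<^esub> z)"
    by (cases x; cases y; cases z) (simp only: hol_mult modL1 modL2 prod.case, simp add: algebra_simps mod_simps)
next
  fix x assume "x \<in> carrier (hol e)"
  then show "\<one>\<^bsub>hol e\<^esub> \<otimes>\<^bsub>hol e\<^esub> x = x"
    using assms by (cases x) (simp add: hol_mult hol_one hol_carrier mod_simps)
next
  fix x assume x: "x \<in> carrier (hol e)"
  obtain u a where xe: "x = (u, a)" by (cases x)
  have "coprime a (2^e)" using x xe by (simp add: hol_carrier)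
  then obtain c where c: "[a * c = 1] (mod 2^e)" using cong_solve_coprime_int by blast
  define b where "b = c mod 2^e"
  have ab: "(a * b) mod 2^e = 1" using c assms unfolding b_def cong_def
    by (simp add: mod_simps)
  have "odd b"
  proof
    assume "even b"
    then have "2 dvd a * b" by simp
    moreover have "(2::int) dvd 2^e" using assms by simp
    ultimately have "2 dvd (a*b) mod 2^e" by (simp add: dvd_mod)
    then show False using ab by simp
  qed
  define v where "v = (- u * b) mod 2^e"
  have "v \<in> {0..<2^e}" unfolding v_def by simp
  have bc: "b \<in> {0..<2^e}" unfolding b_def by simp
  have "(v, b) \<in> carrier (hol e)" using \<open>odd b\<close> \<open>v \<in> _\<close> bc by (simp add: hol_carrier)
  moreover have "(v, b) \<otimes>\<^bsub>hol e\<^esub> x = \<one>\<^bsub>hol e\<^esub>"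
    using ab assms by (simp add: xe hol_mult hol_one v_def mod_simps algebra_simps)
  ultimately show "\<exists>y\<in>carrier (hol e). y \<otimes>\<^bsub>hol e\<^esub> x = \<one>\<^bsub>hol e\<^esub>" by blast
qed

fun geo :: "nat \<Rightarrow> int \<Rightarrow> int" where
  "geo 0 b = 0"
| "geo (Suc n) b = geo n b + b^n"

lemma geo_add: "geo (n + m) b = geo n b + b^n * geo m b"
  by (induction m) (simp_all add: power_add algebra_simps)

lemma geo_mul: "(b - 1) * geo n b = b^n - 1"
  by (induction n) (simp_all add: algebra_simps)

lemma pow_mod4: assumes "(b::int) mod 4 = 1" shows "b^n mod 4 = 1"
proof (induction n)
  case (Suc n)
  have "b^Suc n mod 4 = ((b mod 4) * (b^n mod 4)) mod 4" by (simp add: mod_mult_eq)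
  then show ?case using Suc assms by simp
qed simp

lemma geo_2pow:
  assumes "(b::int) mod 4 = 1"
  shows "\<exists>c. odd c \<and> geo (2^k) b = 2^k * c"
proof (induction k)
  case 0 then show ?case by (intro exI[of _ 1]) simp
next
  case (Suc k)
  then obtain c where c: "odd c" "geo (2^k) b = 2^k * c" by blast
  have m: "b^(2^k) mod 4 = 1" using pow_mod4[OF assms] .
  define q where "q = b^(2^k) div 4"
  have bq: "b^(2^k) = 4 * q + 1" using m unfolding q_def using div_mult_mod_eq[of "b^(2^k)" 4] by linarith
  have "geo (2^Suc k) b = geo (2^k + 2^k) b" by (simp add: mult_2)
  also have "\<dots> = geo (2^k) b * (1 + b^(2^k))" by (simp only: geo_add) (simp add: algebra_simps)
  also have "\<dots> = 2^Suc k * (c * (1 + 2*q))" using c bq by (simp add: algebra_simps)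
  finally show ?case using c by (intro exI[of _ "c * (1 + 2*q)"]) simp
qed

lemma hol_pow:
  "(v, b) [^]\<^bsub>hol e\<^esub> n = ((v * geo n b) mod 2^e, b^n mod 2^e)"
proof (induction n)
  case 0 then show ?case by (simp add: hol_one)
next
  case (Suc n)
  have "(v, b) [^]\<^bsub>hol e\<^esub> Suc n = ((v * geo n b) mod 2^e, b^n mod 2^e) \<otimes>\<^bsub>hol e\<^esub> (v, b)"
    using Suc by simp
  also have "\<dots> = (((v * geo n b) mod 2^e + v * (b^n mod 2^e)) mod 2^e, (b^n mod 2^e * b) mod 2^e)"
    by (simp add: hol_mult)
  also have "\<dots> = ((v * geo (Suc n) b) mod 2^e, b^Suc n mod 2^e)"
    by (simp only: modL1) (simp add: algebra_simps mod_simps)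
  finally show ?case .
qed

lemma ord_pow2:
  assumes "group G" "x \<in> carrier G" "k \<ge> 1"
    and "x [^]\<^bsub>G\<^esub> ((2::nat)^k) = \<one>\<^bsub>G\<^esub>"
    and "x [^]\<^bsub>G\<^esub> ((2::nat)^(k-1)) \<noteq> \<one>\<^bsub>G\<^esub>"
  shows "group.ord G x = 2^k"
proof -
  interpret group G by fact
  have "ord x dvd 2^k" using assms pow_eq_id by blast
  then obtain i where i: "i \<le> k" "ord x = 2^i" using divides_primepow_nat[of 2] by auto
  show ?thesis
  proof (cases "i = k")
    case False
    then have "i \<le> k - 1" using i by simp
    then have "ord x dvd 2^(k-1)" using i by (simp add: le_imp_power_dvd)
    then show ?thesis using assms pow_eq_id by blast
  qed (use i in simp)
qed


lemma not_dvd_half: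
  assumes "odd (m::int)" "e \<ge> 1" shows "\<not> (2::int)^e dvd 2^(e-1) * m"
proof
  assume "(2::int)^e dvd 2^(e-1) * m"
  moreover have "e = Suc (e - 1)" using assms(2) by simp
  then have "(2::int)^e = 2^(e-1) * 2" by (metis power_Suc mult.commute)
  ultimately have "(2::int)^(e-1) * 2 dvd 2^(e-1) * m" by simp
  then have "2 dvd m" by simp
  then show False using assms(1) by simp
qed

lemma ord_L1:
  assumes e: "e \<ge> 2" and x: "(v, b) \<in> carrier (hol e)" and v: "odd v" and b: "b mod 4 = 1"
  shows "group.ord (hol e) (v, b) = 2^e"
proof (rule ord_pow2[OF group_hol x])
  obtain c where c: "odd c" "geo (2^e) b = 2^e * c" using geo_2pow[OF b] by blast
  have "b^(2^e) = (b - 1) * geo (2^e) b + 1" using geo_mul[of b "2^e"] by simp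
  also have "\<dots> = 2^e * ((b - 1) * c) + 1" using c by (simp add: algebra_simps)
  finally have "b^(2^e) mod 2^e = 1 mod 2^e" by simp
  then show "(v, b) [^]\<^bsub>hol e\<^esub> ((2::nat)^e) = \<one>\<^bsub>hol e\<^esub>"
    using c by (simp add: hol_pow hol_one)
next
  obtain c where c: "odd c" "geo (2^(e-1)) b = 2^(e-1) * c" using geo_2pow[OF b] by blast
  have "odd (v * c)" using v c by simp
  then have "\<not> (2::int)^e dvd 2^(e-1) * (v * c)" using not_dvd_half e by simp
  then have "(v * geo (2^(e-1)) b) mod 2^e \<noteq> 0" using c by (simp add: algebra_simps mod_eq_0_iff_dvd)
  then show "(v, b) [^]\<^bsub>hol e\<^esub> ((2::nat)^(e-1)) \<noteq> \<one>\<^bsub>hol e\<^esub>"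
    by (simp add: hol_pow hol_one)
qed (use e in simp_all)

lemma ord_L2:
  assumes e: "e \<ge> 2" and x: "(v, b) \<in> carrier (hol e)" and v: "v mod 4 = 2" and b: "b mod 4 = 1"
  shows "group.ord (hol e) (v, b) = 2^(e-1)"
proof (rule ord_pow2[OF group_hol x])
  define w where "w = v div 2"
  have vw: "v = 2 * w" "odd w" using v unfolding w_def by presburger+
  define r where "r = b div 4"
  have br: "b - 1 = 4 * r" using b unfolding r_def using div_mult_mod_eq[of b 4] by linarith
  obtain c where c: "odd c" "geo (2^(e-1)) b = 2^(e-1) * c" using geo_2pow[OF b] by blast
  have "e = Suc (e - 1)" using e by simp
  then have p: "(2::int) * 2^(e-1) = 2^e" by (metis power_Suc)
  have "b^(2^(e-1)) = (b - 1) * geo (2^(e-1)) b + 1" using geo_mul[of b "2^(e-1)"] by simp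
  also have "\<dots> = 2^e * (2 * r * c) + 1" using br c p by (simp add: algebra_simps)
  finally have "b^(2^(e-1)) mod 2^e = 1 mod 2^e" by simp
  moreover have "v * geo (2^(e-1)) b = 2^e * (w * c)" using vw c p by (simp add: algebra_simps)
  ultimately show "(v, b) [^]\<^bsub>hol e\<^esub> ((2::nat)^(e-1)) = \<one>\<^bsub>hol e\<^esub>"
    by (simp add: hol_pow hol_one)
next
  define w where "w = v div 2"
  have vw: "v = 2 * w" "odd w" using v unfolding w_def by presburger+
  obtain c where c: "odd c" "geo (2^(e-2)) b = 2^(e-2) * c" using geo_2pow[OF b] by blast
  have "e - 1 = Suc (e - 2)" using e by simp
  then have p: "(2::int) * 2^(e-2) = 2^(e-1)" by (simp only: power_Suc)
  have "odd (w * c)" using vw c by simp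
  then have "\<not> (2::int)^e dvd 2^(e-1) * (w * c)" using not_dvd_half e by simp
  moreover have "v * geo (2^(e-2)) b = 2^(e-1) * (w * c)" using vw c p by (simp add: algebra_simps)
  ultimately have "(v * geo (2^(e-1-1)) b) mod 2^e \<noteq> 0" by (simp add: numeral_2_eq_2 mod_eq_0_iff_dvd)
  then show "(v, b) [^]\<^bsub>hol e\<^esub> ((2::nat)^(e-1-1)) \<noteq> \<one>\<^bsub>hol e\<^esub>"
    by (simp add: hol_pow hol_one)
qed (use e in simp_all)


lemma five_pow: "\<exists>q. odd q \<and> (5::int)^(2^j) = 1 + 2^(j+2) * q"
proof (induction j)
  case 0 then show ?case by (intro exI[of _ 1]) simp
next
  case (Suc j)
  then obtain q where q: "odd q" "(5::int)^(2^j) = 1 + 2^(j+2) * q" by blast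
  have "(5::int)^(2^Suc j) = (5^(2^j))^2" by (simp add: power_mult[symmetric] mult.commute)
  also have "\<dots> = 1 + 2^(Suc j+2) * (q + 2^(j+1) * q^2)" unfolding q(2)
    by (simp add: power2_eq_square algebra_simps power_add)
  finally show ?case using q(1) by (intro exI[of _ "q + 2^(j+1) * q^2"]) simp
qed

lemma five_surj_aux: "(b::int) mod 4 = 1 \<Longrightarrow> \<exists>k. (5::int)^k mod 2^(d+2) = b mod 2^(d+2)"
proof (induction d arbitrary: b)
  case 0 then show ?case by (intro exI[of _ 0]) simp
next
  case (Suc d)
  define M :: int where "M = 2^(d+2)"
  obtain k where k: "(5::int)^k mod M = b mod M" using Suc M_def by blast
  then have "M dvd 5^k - b" by (simp add: mod_eq_dvd_iff)
  then obtain t where t: "5^k - b = M * t" by blast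
  have M2: "2^(Suc d + 2) = 2 * M" unfolding M_def by simp
  have "odd b" using Suc.prems by presburger
  show ?case
  proof (cases "even t")
    case True
    then obtain s where "t = 2 * s" by blast
    then have "2 * M dvd 5^k - b" using t by simp
    then show ?thesis unfolding M2 by (intro exI[of _ k]) (simp add: mod_eq_dvd_iff)
  next
    case False
    obtain q where q: "odd q" "(5::int)^(2^d) = 1 + M * q" using five_pow[of d] M_def by blast
    have "(5::int)^(k + 2^d) - b = (b + M * t) * (1 + M * q) - b" using t q by (simp add: power_add)
    also have "\<dots> = M * (t + q * b + M * t * q)" by (simp add: algebra_simps)
    finally have eq: "(5::int)^(k + 2^d) - b = M * (t + q * b + M * t * q)" .
    have "even M" unfolding M_def by simp
    then have "even (t + q * b + M * t * q)" using False q(1) \<open>odd b\<close> by simp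
    then obtain s where "t + q * b + M * t * q = 2 * s" by blast
    then have "2 * M dvd 5^(k + 2^d) - b" using eq by simp
    then show ?thesis unfolding M2 by (intro exI[of _ "k + 2^d"]) (simp add: mod_eq_dvd_iff)
  qed
qed

lemma five_gen: "(0, (5::int)^k mod 2^e) \<in> generate (hol e) {(0, 5 mod 2^e)}"
proof (induction k)
  case 0 then show ?case using generate.one[of "hol e"] by (simp add: hol_one)
next
  case (Suc k)
  have "(0, (5::int)^k mod 2^e) \<otimes>\<^bsub>hol e\<^esub> (0, 5 mod 2^e) \<in> generate (hol e) {(0, 5 mod 2^e)}"
    by (rule generate.eng[OF Suc generate.incl]) simp
  moreover have "(0, (5::int)^k mod 2^e) \<otimes>\<^bsub>hol e\<^esub> (0, 5 mod 2^e) = (0, 5^Suc k mod 2^e)"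
    by (simp add: hol_mult mod_simps mult.commute)
  ultimately show ?case by simp
qed


lemma mod4: assumes "e \<ge> 2" shows "(x::int) mod 2^e mod 4 = x mod 4"
proof -
  have "(2::int)^2 dvd 2^e" using assms by (rule le_imp_power_dvd)
  then show ?thesis by (simp add: mod_mod_cancel)
qed

lemma mul4: "(a::int) mod 4 = r \<Longrightarrow> c mod 4 = s \<Longrightarrow> (a * c) mod 4 = (r * s) mod 4"
  by (metis mod_mult_eq)

lemma sq_L2:
  assumes e: "e \<ge> 2" and x: "(v, b) \<in> carrier (hol e)" and v: "odd v" and b: "b mod 4 = 1"
  shows "(v, b) \<otimes>\<^bsub>hol e\<^esub> (v, b) \<in> carrier (hol e)
    \<and> group.ord (hol e) ((v, b) \<otimes>\<^bsub>hol e\<^esub> (v, b)) = 2^(e-1)"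
proof -
  interpret group "hol e" using group_hol e by simp
  have c: "(v, b) \<otimes>\<^bsub>hol e\<^esub> (v, b) \<in> carrier (hol e)" using x by simp
  have eq: "(v, b) \<otimes>\<^bsub>hol e\<^esub> (v, b) = ((v + v * b) mod 2^e, (b * b) mod 2^e)" by (simp add: hol_mult)
  have "(v * b) mod 4 = v mod 4" using mul4[OF refl b] by simp
  then have "(v + v * b) mod 4 = 2" using v by presburger
  then have 1: "(v + v * b) mod 2^e mod 4 = 2" using mod4[OF e] by simp
  have 2: "(b * b) mod 2^e mod 4 = 1" using mod4[OF e] mul4[OF b b] by simp
  show ?thesis using c ord_L2[OF e _ 1 2] unfolding eq by simp
qed

lemma trans_elem:
  assumes "subgroup G (hol e)" "hol_transitive e G" "0 \<le> y" "y < 2^e"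
  shows "\<exists>b. (y, b) \<in> G"
proof -
  obtain g where g: "g \<in> G" "hol_act e g 0 = y" using assms unfolding hol_transitive_def by force
  obtain u b where gu: "g = (u, b)" by (cases g)
  have "(u, b) \<in> carrier (hol e)" using g gu subgroup.subset[OF assms(1)] by blast
  then have "u = y" using g gu by (simp add: hol_carrier hol_act_def)
  then show ?thesis using g gu by blast
qed


theorem lemma5p1:
  fixes e :: nat and G :: "(int \<times> int) set"
  assumes "e \<ge> 2"
    and "subgroup G (hol e)"
    and "hol_transitive e G"
  shows "(\<exists>g \<in> G. group.ord (hol e) g = 2^(e-1))
    \<and> ((\<not> (\<exists>g \<in> G. group.ord (hol e) g = 2^e)) \<longrightarrow>
         (\<forall>v b. (v, b) \<in> G \<longrightarrow> [b - 1 = 2 * v] (mod 4))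
         \<and> hol_stab e G \<subseteq> generate (hol e) {(0, 5 mod 2^e)})"
proof -
  note e = assms(1)
  interpret group "hol e" using group_hol e by simp
  interpret sg: subgroup G "hol e" by fact
  have p4: "(4::int) \<le> 2^e" using e power_increasing[of 2 e "2::int"] by simp
  have inC: "\<And>v b. (v, b) \<in> G \<Longrightarrow> 0 \<le> v \<and> v < 2^e \<and> 0 \<le> b \<and> b < 2^e \<and> odd b"
    using sg.subset by (auto simp: hol_carrier)
  obtain c1 where c1: "(1, c1) \<in> G" using trans_elem[OF assms(2,3), of 1] p4 by auto
  obtain c2 where c2: "(2, c2) \<in> G" using trans_elem[OF assms(2,3), of 2] p4 by auto
  have c1o: "c1 mod 4 = 1 \<or> c1 mod 4 = 3" using inC[OF c1] by presburger
  have c2o: "c2 mod 4 = 1 \<or> c2 mod 4 = 3" using inC[OF c2] by presburger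
  have sqG: "\<exists>g\<in>G. group.ord (hol e) g = 2^(e-1)"
    if "(v, b) \<in> G" "odd v" "b mod 4 = 1" for v b
    using sq_L2[OF e sg.subset[THEN subsetD, OF that(1)] that(2,3)] that(1) by blast
  have prodG: "(v, b) \<otimes>\<^bsub>hol e\<^esub> (1, c1) \<in> G \<and> odd (fst ((v, b) \<otimes>\<^bsub>hol e\<^esub> (1, c1)))
      \<and> snd ((v, b) \<otimes>\<^bsub>hol e\<^esub> (1, c1)) mod 4 = 1"
    if "(v, b) \<in> G" "even v" "b mod 4 = 3" "c1 mod 4 = 3" for v b
  proof -
    have eq: "(v, b) \<otimes>\<^bsub>hol e\<^esub> (1, c1) = ((v + b) mod 2^e, (b * c1) mod 2^e)" by (simp add: hol_mult)
    have m: "(v + b) mod 2^e mod 4 = (v + b) mod 4" "(b * c1) mod 2^e mod 4 = 1"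
      using mod4[OF e] mul4[OF that(3,4)] by simp_all
    have "(v + b) mod 4 = 1 \<or> (v + b) mod 4 = 3" using that(2,3) by presburger
    moreover have "\<And>w::int. w mod 4 = 1 \<or> w mod 4 = 3 \<Longrightarrow> odd w" by presburger
    ultimately have "odd ((v + b) mod 2^e)" using m(1) by metis
    moreover have "(v, b) \<otimes>\<^bsub>hol e\<^esub> (1, c1) \<in> G" using that(1) c1 by (rule sg.m_closed)
    ultimately show ?thesis using m(2) unfolding eq by simp
  qed
  have part1: "\<exists>g\<in>G. group.ord (hol e) g = 2^(e-1)"
  proof (cases "c2 mod 4 = 1")
    case True
    have "(2::int) mod 4 = 2" by simp
    then show ?thesis using ord_L2[OF e sg.subset[THEN subsetD, OF c2] _ True] c2 by blast
  next
    case False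
    then have c23: "c2 mod 4 = 3" using c2o by simp
    show ?thesis
    proof (cases "c1 mod 4 = 1")
      case True then show ?thesis using sqG[OF c1] by simp
    next
      case False
      then have c13: "c1 mod 4 = 3" using c1o by simp
      define p where "p = (2, c2) \<otimes>\<^bsub>hol e\<^esub> (1, c1)"
      have "p \<in> G" "odd (fst p)" "snd p mod 4 = 1" using prodG[OF c2 _ c23 c13] unfolding p_def by auto
      then show ?thesis using sqG[of "fst p" "snd p"] by simp
    qed
  qed
  moreover have "(\<forall>v b. (v, b) \<in> G \<longrightarrow> [b - 1 = 2 * v] (mod 4))
         \<and> hol_stab e G \<subseteq> generate (hol e) {(0, 5 mod 2^e)}"
    if no: "\<not> (\<exists>g \<in> G. group.ord (hol e) g = 2^e)"
  proof -
    have L1G: False if "(v, b) \<in> G" "odd v" "b mod 4 = 1" for v b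
      using ord_L1[OF e sg.subset[THEN subsetD, OF that(1)] that(2,3)] that(1) no by blast
    have c13: "c1 mod 4 = 3" using c1o L1G[OF c1] by auto
    have A: "[b - 1 = 2 * v] (mod 4)" if vb: "(v, b) \<in> G" for v b
    proof -
      have "b mod 4 = 1 \<or> b mod 4 = 3" using inC[OF vb] by presburger
      moreover have "\<not> (odd v \<and> b mod 4 = 1)" using L1G[OF vb] by blast
      moreover have "\<not> (even v \<and> b mod 4 = 3)"
      proof
        assume h: "even v \<and> b mod 4 = 3"
        define p where "p = (v, b) \<otimes>\<^bsub>hol e\<^esub> (1, c1)"
        from prodG[OF vb _ _ c13] h have "p \<in> G" "odd (fst p)" "snd p mod 4 = 1"
          unfolding p_def by auto
        then show False using L1G[of "fst p" "snd p"] by simp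
      qed
      ultimately show ?thesis unfolding cong_def by presburger
    qed
    have B: "hol_stab e G \<subseteq> generate (hol e) {(0, 5 mod 2^e)}"
    proof
      fix g assume g: "g \<in> hol_stab e G"
      obtain v b where gv: "g = (v, b)" by (cases g)
      have vbG: "(v, b) \<in> G" and "v mod 2^e = 0" using g gv by (auto simp: hol_stab_def hol_act_def)
      then have v0: "v = 0" using inC[OF vbG] by simp
      have "b mod 4 = 1" using A[OF vbG] v0 unfolding cong_def by presburger
      then obtain k where k: "(5::int)^k mod 2^(e-2+2) = b mod 2^(e-2+2)" using five_surj_aux by blast
      have "e - 2 + 2 = e" using e by simp
      then have "b = 5^k mod 2^e" using k inC[OF vbG] by simp
      then show "g \<in> generate (hol e) {(0, 5 mod 2^e)}" using five_gen[of k e] gv v0 by simp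
    qed
    show ?thesis using A B by blast
  qed
  ultimately show ?thesis by blast
qed

end
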